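(* Let $G$ be a graph with Hermitian adjacency matrix $A$ and let $u$ be an arbitrary vertex of $G$. Then $G$ has universal perfect state transfer if and only if perfect state transfer occurs from $u$ to every vertex of $G$ (i.e. for every vertex $v$ there is $t>0$ with $|\langle v|e^{-\mathtt{i} A t}|u\rangle|=1$).
   Context: The continuous-time quantum walk on a graph with Hermitian adjacency matrix $A$ is $U(t)=\exp(-\mathtt{i} A t)$. Perfect state transfer occurs from vertex $v$ to vertex $w$ at time $t>0$ if $|\langle w| e^{-\mathtt{i} A t}|v\rangle|=1$. $G$ has universal perfect state transfer if for every pair of vertices $v,w$ (including $v=w$) perfect state transfer occurs from $v$ to $w$ at some time $t>0$. *)

theory Defs
  imports "HOL-Analysis.Analysis"
begin

text \<open>Graphs are identified with their Hermitian adjacency matrix A (complex weighted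
  graph); vertices are the elements of a finite type 'n.\<close>

definition hermitian :: "complex^'n^'n \<Rightarrow> bool" where
  "hermitian A \<longleftrightarrow> (\<forall>i j. A $ i $ j = cnj (A $ j $ i))"

fun mat_pow :: "complex^'n^'n \<Rightarrow> nat \<Rightarrow> complex^'n^'n" where
  "mat_pow A 0 = mat 1"
| "mat_pow A (Suc k) = A ** mat_pow A k"

definition mat_exp :: "complex^'n^'n \<Rightarrow> complex^'n^'n" where
  "mat_exp M = (\<chi> i j. (\<Sum>k. (mat_pow M k) $ i $ j / of_nat (fact k)))"

definition walk :: "complex^'n^'n \<Rightarrow> real \<Rightarrow> complex^'n^'n" where
  "walk A t = mat_exp (\<chi> i j. - \<i> * of_real t * A $ i $ j)"

definition pst_at :: "complex^'n^'n \<Rightarrow> 'n \<Rightarrow> 'n \<Rightarrow> real \<Rightarrow> bool" where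
  "pst_at A v w t \<longleftrightarrow> t > 0 \<and> norm (walk A t $ w $ v) = 1"

definition pst :: "complex^'n^'n \<Rightarrow> 'n \<Rightarrow> 'n \<Rightarrow> bool" where
  "pst A v w \<longleftrightarrow> (\<exists>t. pst_at A v w t)"

definition universal_pst :: "complex^'n^'n \<Rightarrow> bool" where
  "universal_pst A \<longleftrightarrow> (\<forall>v w. pst A v w)"

end

theory Submission imports Defs begin

lemma mm_entry: "(M ** N) $ i $ j = (\<Sum>k\<in>UNIV. M $ i $ k * N $ k $ j)"
  by (simp add: matrix_matrix_mult_def)

lemma mat_pow_add: "mat_pow Y (a + b) = mat_pow Y a ** mat_pow Y b"
  by (induction a) (simp_all add: matrix_mul_assoc matrix_mul_lid)

lemma mat_pow_one: "mat_pow Y 1 = Y"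
  by (simp add: matrix_mul_rid)

lemma mat_pow_Suc': "mat_pow Y (Suc n) = mat_pow Y n ** Y"
  using mat_pow_add[of Y n 1] by (simp add: mat_pow_one)

lemma mat_pow_scale:
  "mat_pow (\<chi> i j. c * Y $ i $ j) n = (\<chi> i j. c ^ n * mat_pow Y n $ i $ j)"
proof (induction n)
  case 0 then show ?case by (simp add: mat_def vec_eq_iff)
next
  case (Suc n)
  show ?case using Suc
    by (simp add: vec_eq_iff mm_entry sum_distrib_left algebra_simps)
qed

definition mnorm :: "complex^'n^'n \<Rightarrow> real" where
  "mnorm M = (\<Sum>i\<in>UNIV. \<Sum>j\<in>UNIV. norm (M $ i $ j))"

lemma mnorm_nonneg: "0 \<le> mnorm M"
  unfolding mnorm_def by (intro sum_nonneg) auto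

lemma entry_le_mnorm: "norm (M $ i $ j) \<le> mnorm M"
proof -
  have "norm (M $ i $ j) \<le> (\<Sum>j\<in>UNIV. norm (M $ i $ j))"
    by (rule member_le_sum) auto
  also have "\<dots> \<le> mnorm M" unfolding mnorm_def
    by (rule member_le_sum[of i]) (auto intro: sum_nonneg)
  finally show ?thesis .
qed

lemma mnorm_mult: "mnorm (M ** N) \<le> mnorm M * mnorm N"
proof -
  have e: "norm ((M ** N) $ i $ j) \<le> (\<Sum>k\<in>UNIV. norm (M $ i $ k) * norm (N $ k $ j))" for i j
  proof -
    have "norm ((M ** N) $ i $ j) = norm (\<Sum>k\<in>UNIV. M $ i $ k * N $ k $ j)"
      by (simp only: mm_entry)
    also have "\<dots> \<le> (\<Sum>k\<in>UNIV. norm (M $ i $ k * N $ k $ j))"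
      by (rule norm_sum)
    finally show ?thesis by (simp only: norm_mult)
  qed
  have r: "(\<Sum>j\<in>UNIV. norm (N $ k $ j)) \<le> mnorm N" for k
    unfolding mnorm_def by (rule member_le_sum[of k]) (auto intro: sum_nonneg)
  have "mnorm (M ** N) \<le> (\<Sum>i\<in>UNIV. \<Sum>j\<in>UNIV. \<Sum>k\<in>UNIV. norm (M $ i $ k) * norm (N $ k $ j))"
    unfolding mnorm_def by (intro sum_mono e)
  also have "\<dots> = (\<Sum>i\<in>UNIV. \<Sum>k\<in>UNIV. norm (M $ i $ k) * (\<Sum>j\<in>UNIV. norm (N $ k $ j)))"
  proof (rule sum.cong[OF refl])
    fix i
    show "(\<Sum>j\<in>UNIV. \<Sum>k\<in>UNIV. norm (M $ i $ k) * norm (N $ k $ j))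
        = (\<Sum>k\<in>UNIV. norm (M $ i $ k) * (\<Sum>j\<in>UNIV. norm (N $ k $ j)))"
      by (subst sum.swap) (simp only: sum_distrib_left)
  qed
  also have "\<dots> \<le> (\<Sum>i\<in>UNIV. \<Sum>k\<in>UNIV. norm (M $ i $ k) * mnorm N)"
    by (intro sum_mono mult_left_mono r norm_ge_zero)
  also have "\<dots> = mnorm M * mnorm N"
    by (simp only: mnorm_def sum_distrib_right)
  finally show ?thesis .
qed

lemma mnorm_pow: fixes Y :: "complex^'n^'n" shows "mnorm (mat_pow Y n) \<le> mnorm (mat 1 :: complex^'n^'n) * mnorm Y ^ n"
proof (induction n)
  case 0 then show ?case by simp
next
  case (Suc n)
  have "mnorm (mat_pow Y (Suc n)) \<le> mnorm Y * mnorm (mat_pow Y n)"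
    by (simp add: mnorm_mult)
  also have "\<dots> \<le> mnorm Y * (mnorm (mat 1 :: complex^'n^'n) * mnorm Y ^ n)"
    by (intro mult_left_mono Suc mnorm_nonneg)
  finally show ?case by (simp add: algebra_simps)
qed

lemma summable_terms:
  fixes Y :: "complex^'n^'n"
  shows "summable (\<lambda>n. norm (of_real t ^ n * mat_pow Y n $ i $ j / of_nat (fact n)))"
proof (rule summable_comparison_test)
  let ?C = "mnorm (mat 1 :: complex^'n^'n)"
  show "summable (\<lambda>n. ?C * (inverse (fact n) * (\<bar>t\<bar> * mnorm Y) ^ n))"
    by (intro summable_mult summable_exp)
  show "\<exists>N. \<forall>n\<ge>N. norm (norm (of_real t ^ n * mat_pow Y n $ i $ j / of_nat (fact n)))
        \<le> ?C * (inverse (fact n) * (\<bar>t\<bar> * mnorm Y) ^ n)"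
  proof (intro exI allI impI)
    fix n :: nat
    have "norm (norm (of_real t ^ n * mat_pow Y n $ i $ j / of_nat (fact n)))
       = \<bar>t\<bar> ^ n * norm (mat_pow Y n $ i $ j) / fact n"
      by (simp add: norm_mult norm_divide norm_power)
    also have "\<dots> \<le> \<bar>t\<bar> ^ n * (?C * mnorm Y ^ n) / fact n"
      by (intro divide_right_mono mult_left_mono order_trans[OF entry_le_mnorm mnorm_pow]) auto
    also have "\<dots> = ?C * (inverse (fact n) * (\<bar>t\<bar> * mnorm Y) ^ n)"
      by (simp add: field_simps power_mult_distrib)
    finally show "norm (norm (of_real t ^ n * mat_pow Y n $ i $ j / of_nat (fact n)))
        \<le> ?C * (inverse (fact n) * (\<bar>t\<bar> * mnorm Y) ^ n)" .
  qed
qed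


lemma aux1: "(c::complex) \<noteq> 0 \<Longrightarrow> d \<noteq> 0 \<Longrightarrow> x * y / d * p = c * x * y * p / (d * c)"
  by (simp add: field_simps)

lemma aux2: "(\<Sum>a\<le>n. of_nat (n choose a) * of_real s ^ a * of_real t ^ (n - a)) * (p::complex) / q
   = of_real (s + t) ^ n * p / q"
  by (simp add: binomial_ring)

definition Ym :: "complex^'n^'n \<Rightarrow> complex^'n^'n" where
  "Ym A = (\<chi> i j. - \<i> * A $ i $ j)"

lemma walk_eq: "walk A t = mat_exp (\<chi> i j. of_real t * Ym A $ i $ j)"
  unfolding walk_def Ym_def by (simp add: algebra_simps)

lemma walk_sums:
  "(\<lambda>n. of_real t ^ n * mat_pow (Ym A) n $ i $ j / of_nat (fact n)) sums (walk A t $ i $ j)"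
proof -
  have "summable (\<lambda>n. of_real t ^ n * mat_pow (Ym A) n $ i $ j / of_nat (fact n))"
    by (rule summable_norm_cancel[OF summable_terms])
  then show ?thesis
    unfolding walk_eq mat_exp_def mat_pow_scale by (simp add: summable_sums)
qed

lemma walk_add: "walk A (s + t) = walk A s ** walk A t"
proof -
  let ?P = "mat_pow (Ym A)"
  let ?a = "\<lambda>s i j n. of_real s ^ n * ?P n $ i $ j / (of_nat (fact n) :: complex)"
  have "walk A (s + t) $ i $ j = (walk A s ** walk A t) $ i $ j" for i j
  proof -
    have c: "(\<lambda>n. \<Sum>a\<le>n. ?a s i l a * ?a t l j (n - a)) sums (walk A s $ i $ l * walk A t $ l $ j)" for l
    proof -
      have "(\<lambda>n. \<Sum>a\<le>n. ?a s i l a * ?a t l j (n - a)) sums ((\<Sum>n. ?a s i l n) * (\<Sum>n. ?a t l j n))"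
        by (rule Cauchy_product_sums[OF summable_terms summable_terms])
      then show ?thesis by (simp only: walk_sums[THEN sums_unique, symmetric])
    qed
    have "(\<lambda>n. \<Sum>l\<in>UNIV. \<Sum>a\<le>n. ?a s i l a * ?a t l j (n - a)) sums (\<Sum>l\<in>UNIV. walk A s $ i $ l * walk A t $ l $ j)"
      by (rule sums_sum) (use c in auto)
    moreover have "(\<Sum>l\<in>UNIV. \<Sum>a\<le>n. ?a s i l a * ?a t l j (n - a)) = ?a (s + t) i j n" for n
    proof -
      have "(\<Sum>l\<in>UNIV. \<Sum>a\<le>n. ?a s i l a * ?a t l j (n - a))
          = (\<Sum>a\<le>n. of_real s ^ a * of_real t ^ (n - a) / (of_nat (fact a) * of_nat (fact (n - a)))
               * (\<Sum>l\<in>UNIV. ?P a $ i $ l * ?P (n - a) $ l $ j))"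
        by (subst sum.swap) (simp add: sum_distrib_left algebra_simps)
      also have "\<dots> = (\<Sum>a\<le>n. of_real s ^ a * of_real t ^ (n - a) / (of_nat (fact a) * of_nat (fact (n - a)))
               * ?P n $ i $ j)"
      proof (intro sum.cong refl)
        fix a assume "a \<in> {..n}"
        then have "?P n = ?P a ** ?P (n - a)" using mat_pow_add[of "Ym A" a "n - a"] by simp
        then show "of_real s ^ a * of_real t ^ (n - a) / (of_nat (fact a) * of_nat (fact (n - a)))
               * (\<Sum>l\<in>UNIV. ?P a $ i $ l * ?P (n - a) $ l $ j) = of_real s ^ a * of_real t ^ (n - a) / (of_nat (fact a) * of_nat (fact (n - a)))
               * ?P n $ i $ j" by (simp add: mm_entry)
      qed
      also have "\<dots> = (\<Sum>a\<le>n. of_nat (n choose a) * of_real s ^ a * of_real t ^ (n - a)) * ?P n $ i $ j / of_nat (fact n)"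
      proof -
        have eqa: "of_real s ^ a * of_real t ^ (n - a) / (of_nat (fact a) * of_nat (fact (n - a))) * ?P n $ i $ j
             = of_nat (n choose a) * of_real s ^ a * of_real t ^ (n - a) * ?P n $ i $ j / of_nat (fact n)"
          if "a \<in> {..n}" for a
        proof -
          have an: "a \<le> n" using that by simp
          have f: "(of_nat (fact a) * of_nat (fact (n - a)) * of_nat (n choose a) :: complex) = of_nat (fact n)"
            using binomial_fact_lemma[OF an] by (metis of_nat_mult)
          have C: "(of_nat (n choose a) :: complex) \<noteq> 0" using an by simp
          have d: "(of_nat (fact a) * of_nat (fact (n - a)) :: complex) \<noteq> 0" by simp
          show ?thesis by (simp only: f[symmetric]) (rule aux1[OF C d])
        qed
        have "(\<Sum>a\<le>n. of_real s ^ a * of_real t ^ (n - a) / (of_nat (fact a) * of_nat (fact (n - a))) * ?P n $ i $ j)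
           = (\<Sum>a\<le>n. of_nat (n choose a) * of_real s ^ a * of_real t ^ (n - a) * ?P n $ i $ j / of_nat (fact n))"
          by (rule sum.cong[OF refl eqa])
        also have "\<dots> = (\<Sum>a\<le>n. of_nat (n choose a) * of_real s ^ a * of_real t ^ (n - a)) * ?P n $ i $ j / of_nat (fact n)"
          by (simp only: sum_distrib_right sum_divide_distrib)
        finally show ?thesis .
      qed
      also have "\<dots> = ?a (s + t) i j n"
        by (rule aux2)
      finally show ?thesis .
    qed
    ultimately have "(\<lambda>n. ?a (s + t) i j n) sums (walk A s ** walk A t) $ i $ j"
      by (simp add: mm_entry)
    then show ?thesis using walk_sums sums_unique2 by blast
  qed
  then show ?thesis by (simp add: vec_eq_iff)
qed

lemma walk_zero: "walk A 0 = mat 1"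
proof -
  have "walk A 0 $ i $ j = mat 1 $ i $ j" for i j
  proof -
    have "(\<lambda>n. of_real 0 ^ n * mat_pow (Ym A) n $ i $ j / of_nat (fact n)) sums (mat 1 $ i $ j :: complex)"
    proof -
      have eq: "(\<lambda>n. of_real 0 ^ n * mat_pow (Ym A) n $ i $ j / (of_nat (fact n) :: complex)) = (\<lambda>n. if n = 0 then mat 1 $ i $ j else 0)"
        by (auto simp: fun_eq_iff)
      show ?thesis unfolding eq using sums_single[of 0 "\<lambda>_. mat 1 $ i $ j :: complex"] by simp
    qed
    then show ?thesis using walk_sums sums_unique2 by blast
  qed
  then show ?thesis by (simp add: vec_eq_iff)
qed


lemma Ym_cnj:
  assumes "hermitian A"
  shows "cnj (Ym A $ j $ k) = - Ym A $ k $ j"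
proof -
  have h: "A $ k $ j = cnj (A $ j $ k)" using assms unfolding hermitian_def by blast
  show ?thesis unfolding Ym_def by (simp only: vec_lambda_beta h complex_cnj_mult complex_cnj_minus complex_cnj_i) simp
qed

lemma pow_cnj:
  assumes "hermitian A"
  shows "cnj (mat_pow (Ym A) n $ j $ i) = (-1) ^ n * mat_pow (Ym A) n $ i $ j"
proof (induction n arbitrary: i j)
  case 0 then show ?case by (simp add: mat_def)
next
  case (Suc n)
  have "cnj (mat_pow (Ym A) (Suc n) $ j $ i)
      = (\<Sum>k\<in>UNIV. cnj (Ym A $ j $ k) * cnj (mat_pow (Ym A) n $ k $ i))"
    by (simp add: mm_entry)
  also have "\<dots> = (\<Sum>k\<in>UNIV. (- Ym A $ k $ j) * ((-1) ^ n * mat_pow (Ym A) n $ i $ k))"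
    using Suc Ym_cnj[OF assms] by simp
  also have "\<dots> = (-1) ^ Suc n * (mat_pow (Ym A) n ** Ym A) $ i $ j"
    by (simp add: mm_entry sum_distrib_left algebra_simps)
  also have "\<dots> = (-1) ^ Suc n * mat_pow (Ym A) (Suc n) $ i $ j"
    by (simp only: mat_pow_Suc')
  finally show ?case .
qed

lemma walk_adj:
  assumes "hermitian A"
  shows "walk A (- t) $ i $ j = cnj (walk A t $ j $ i)"
proof -
  have "(\<lambda>n. cnj (of_real t ^ n * mat_pow (Ym A) n $ j $ i / of_nat (fact n))) sums cnj (walk A t $ j $ i)"
    by (rule sums_cnj[THEN iffD2, OF walk_sums])
  moreover have "(\<lambda>n. cnj (of_real t ^ n * mat_pow (Ym A) n $ j $ i / of_nat (fact n)))
     = (\<lambda>n. of_real (- t) ^ n * mat_pow (Ym A) n $ i $ j / of_nat (fact n))"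
  proof (rule ext)
    fix n
    have "cnj (of_real t ^ n * mat_pow (Ym A) n $ j $ i / of_nat (fact n))
       = of_real t ^ n * ((-1) ^ n * mat_pow (Ym A) n $ i $ j) / of_nat (fact n)"
      by (simp only: complex_cnj_mult complex_cnj_divide complex_cnj_power complex_cnj_complex_of_real
          complex_cnj_of_nat pow_cnj[OF assms])
    also have "\<dots> = of_real (- t) ^ n * mat_pow (Ym A) n $ i $ j / of_nat (fact n)"
    proof -
      have p: "(of_real (- t) :: complex) ^ n = (-1) ^ n * of_real t ^ n"
        unfolding of_real_minus by (rule power_minus)
      show ?thesis by (simp only: p mult_ac)
    qed
    finally show "cnj (of_real t ^ n * mat_pow (Ym A) n $ j $ i / of_nat (fact n))
       = of_real (- t) ^ n * mat_pow (Ym A) n $ i $ j / of_nat (fact n)" .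
  qed
  ultimately have "(\<lambda>n. of_real (- t) ^ n * mat_pow (Ym A) n $ i $ j / of_nat (fact n)) sums cnj (walk A t $ j $ i)"
    by simp
  then show ?thesis using walk_sums[of "- t" A i j] sums_unique2 by blast
qed

lemma sum_if_col: fixes f :: "'n::finite \<Rightarrow> complex" shows "(\<Sum>l\<in>UNIV. f l * (if l = u then c else 0)) = f u * (c::complex)"
proof -
  have "(\<Sum>l\<in>UNIV. f l * (if l = u then c else 0)) = (\<Sum>l\<in>UNIV. if l = u then f l * c else 0)"
    by (rule sum.cong) auto
  also have "\<dots> = f u * c"
    using sum.delta[of UNIV u "\<lambda>l. f l * c"] by simp
  finally show ?thesis .
qed

lemma col_norm:
  assumes "hermitian A"
  shows "(\<Sum>k\<in>UNIV. norm (walk A t $ k $ j) ^ 2) = 1"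
proof -
  have "mat 1 $ j $ j = (walk A (- t) ** walk A t) $ j $ j"
    using walk_add[of A "- t" t] walk_zero[of A] by simp
  then have "1 = (\<Sum>k\<in>UNIV. cnj (walk A t $ k $ j) * walk A t $ k $ j)"
    by (simp add: mat_def mm_entry walk_adj[OF assms])
  also have "\<dots> = (\<Sum>k\<in>UNIV. of_real (norm (walk A t $ k $ j) ^ 2))"
    by (rule sum.cong[OF refl]) (simp only: complex_norm_square mult.commute)
  also have "\<dots> = of_real (\<Sum>k\<in>UNIV. norm (walk A t $ k $ j) ^ 2)"
    by (simp only: of_real_sum)
  finally show ?thesis by (metis of_real_eq_1_iff)
qed

lemma col_single:
  assumes "hermitian A" "norm (walk A t $ v $ u) = 1" "k \<noteq> v"
  shows "walk A t $ k $ u = 0"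
proof -
  have "(\<Sum>k\<in>UNIV. norm (walk A t $ k $ u) ^ 2) = norm (walk A t $ v $ u) ^ 2 + (\<Sum>k\<in>UNIV - {v}. norm (walk A t $ k $ u) ^ 2)"
    by (simp add: sum.remove)
  then have "(\<Sum>k\<in>UNIV - {v}. norm (walk A t $ k $ u) ^ 2) = 0"
    using col_norm[OF assms(1)] assms(2) by simp
  then have "norm (walk A t $ k $ u) ^ 2 = 0"
    using assms(3) by (subst (asm) sum_nonneg_eq_0_iff) auto
  then show ?thesis by simp
qed

lemma entry_col:
  assumes "hermitian A" "norm (walk A t $ v $ u) = 1"
  shows "(M ** walk A t) $ w $ u = M $ w $ v * walk A t $ v $ u"
proof -
  have "(M ** walk A t) $ w $ u = (\<Sum>l\<in>UNIV. M $ w $ l * walk A t $ l $ u)" by (simp add: mm_entry)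
  also have "\<dots> = M $ w $ v * walk A t $ v $ u"
    by (rule sum.mono_neutral_right[where S="{v}", simplified]) (auto simp: col_single[OF assms])
  finally show ?thesis .
qed

lemma walk_mult_period:
  assumes "hermitian A" "norm (walk A P $ u $ u) = 1"
  shows "walk A (real n * P) $ k $ u = (if k = u then (walk A P $ u $ u) ^ n else 0)"
proof (induction n arbitrary: k)
  case 0 then show ?case by (simp add: walk_zero mat_def)
next
  case (Suc n)
  have "walk A (real (Suc n) * P) = walk A (real n * P) ** walk A P"
    by (simp add: walk_add[symmetric] algebra_simps)
  then show ?case using Suc entry_col[OF assms, of "walk A (real n * P)" k] by simp
qed

theorem lemma2:
  fixes A :: "complex^'n^'n" and u :: 'n
  assumes "hermitian A"
  shows "universal_pst A \<longleftrightarrow> (\<forall>v. pst A u v)"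
proof
  assume "universal_pst A" then show "\<forall>v. pst A u v" by (simp add: universal_pst_def)
next
  assume H: "\<forall>v. pst A u v"
  show "universal_pst A" unfolding universal_pst_def
  proof (intro allI)
    fix v w
    obtain P where P: "P > 0" "norm (walk A P $ u $ u) = 1"
      using H unfolding pst_def pst_at_def by blast
    obtain t1 where t1: "t1 > 0" "norm (walk A t1 $ v $ u) = 1"
      using H unfolding pst_def pst_at_def by blast
    obtain t2 where t2: "t2 > 0" "norm (walk A t2 $ w $ u) = 1"
      using H unfolding pst_def pst_at_def by blast
    obtain n :: nat where n: "t1 < real n * P" using ex_less_of_nat_mult[OF P(1)] by auto
    define s where "s = t2 + real n * P - t1"
    have s: "s > 0" using n t2 by (simp add: s_def)
    have "walk A (s + t1) $ w $ u = walk A s $ w $ v * walk A t1 $ v $ u"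
      by (simp add: walk_add entry_col[OF assms t1(2)])
    moreover have "walk A (s + t1) $ w $ u = walk A t2 $ w $ u * (walk A P $ u $ u) ^ n"
    proof -
      have "walk A (s + t1) = walk A t2 ** walk A (real n * P)"
        by (simp add: s_def walk_add[symmetric])
      then show ?thesis
        by (simp only: mm_entry walk_mult_period[OF assms P(2)] sum_if_col)
    qed
    ultimately have "norm (walk A s $ w $ v) * norm (walk A t1 $ v $ u) = norm (walk A t2 $ w $ u) * norm (walk A P $ u $ u) ^ n"
      by (metis norm_mult norm_power)
    then have "norm (walk A s $ w $ v) = 1" using t1 t2 P by simp
    then show "pst A v w" unfolding pst_def pst_at_def using s by blast
  qed
qed

end
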